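(* Let $n\ge 1$ be an integer and consider the encrypted-cloning encoded state $\rho_{\mathrm{enc}}^{(n)}$ on the qubits $A,S_1,N_1,\dots,S_n,N_n$ (defined in the context). Let $\mathcal R_n=\{S_1,N_1,\dots,S_n,N_n\}$ be the storage register. Any subset $B\subset \mathcal R_n$ that misses a complete pair, i.e. such that $S_j\notin B$ and $N_j\notin B$ for some $j\in\{1,\dots,n\}$, is completely non-informative: the reduced state $\rho_B(\psi)$, obtained from $\rho_{\mathrm{enc}}^{(n)}$ by tracing out $A$ and all qubits of $\mathcal R_n\setminus B$, does not depend on the input state $\ket{\psi}$.
   Context: Pauli operators: $\sigma_0=I,\sigma_1=X,\sigma_2=Y,\sigma_3=Z$. An input qubit $A$ is prepared in an arbitrary pure state $\ket{\psi}_A$. For $i=1,\dots,n$, the signal qubit $S_i$ and noise qubit $N_i$ are prepared in the Bell state $\ket{\phi}_{S_iN_i}=\frac{1}{\sqrt2}(\ket{00}+\ket{11})$. Set $\alpha_0=1$, $\alpha_1=\alpha_3=i$, $\alpha_2=-i^{\,n+1}$, and define the unitary $U_{\mathrm{enc}}^{(n)}=\frac12\sum_{\mu=0}^3\alpha_\mu^{-1}\sigma_\mu^{(A)}\otimes\bigotimes_{i=1}^n\sigma_\mu^{(S_i)}$ (acting as identity on the $N_i$). The encoded state is $\ket{\Psi_{\mathrm{enc}}}=U_{\mathrm{enc}}^{(n)}\big[\ket{\psi}_A\otimes\bigotimes_{i=1}^n\ket{\phi}_{S_iN_i}\big]$ and $\rho_{\mathrm{enc}}^{(n)}=\ket{\Psi_{\mathrm{enc}}}\bra{\Psi_{\mathrm{enc}}}$.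 A subset $B$ of the storage register is called completely non-informative (completely uninformative) if its reduced state $\rho_B(\psi)$ is independent of $\ket{\psi}$. *)

theory Defs
  imports Complex_Main
begin

datatype qlabel = QA | QS nat | QN nat

text \<open>A computational-basis configuration assigns a bit to every qubit label.\<close>
type_synonym config = "qlabel \<Rightarrow> bool"

definition qubits :: "nat \<Rightarrow> qlabel set" where
  "qubits n = insert QA (QS ` {1..n} \<union> QN ` {1..n})"

definition storage :: "nat \<Rightarrow> qlabel set" where
  "storage n = QS ` {1..n} \<union> QN ` {1..n}"

definition configs :: "qlabel set \<Rightarrow> config set" where
  "configs X = {f. \<forall>q. q \<notin> X \<longrightarrow> f q = False}"

text \<open>Matrix entries of the Pauli operators (False = |0>, True = |1>):
  pauli mu a b = <a| sigma_mu |b>.\<close>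
definition pauli :: "nat \<Rightarrow> bool \<Rightarrow> bool \<Rightarrow> complex" where
  "pauli mu a b =
     (if mu = 0 then (if a = b then 1 else 0)
      else if mu = 1 then (if a \<noteq> b then 1 else 0)
      else if mu = 2 then (if a = b then 0 else if a then \<i> else - \<i>)
      else (if a = b then (if a then -1 else 1) else 0))"

definition alpha :: "nat \<Rightarrow> nat \<Rightarrow> complex" where
  "alpha n mu = (if mu = 0 then 1 else if mu = 2 then - (\<i> ^ (n + 1)) else \<i>)"

text \<open>State vectors on the qubits of qubits n: functions on configurations.
  The input state psi : bool => complex gives the amplitudes of |0>, |1>.\<close>
definition pure_qubit :: "(bool \<Rightarrow> complex) \<Rightarrow> bool" where
  "pure_qubit psi \<longleftrightarrow> (cmod (psi False))\<^sup>2 + (cmod (psi True))\<^sup>2 = 1"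

text \<open>Initial state |psi>_A (x) tensor_i |phi>_{S_i N_i}.\<close>
definition init_state :: "nat \<Rightarrow> (bool \<Rightarrow> complex) \<Rightarrow> config \<Rightarrow> complex" where
  "init_state n psi f =
     psi (f QA) * (\<Prod>i\<in>{1..n}. if f (QS i) = f (QN i) then complex_of_real (1 / sqrt 2) else 0)"

text \<open>Matrix element <f| sigma_mu^(A) (x) tensor_i sigma_mu^(S_i) (x) Id_N |g>.\<close>
definition pauli_string :: "nat \<Rightarrow> nat \<Rightarrow> config \<Rightarrow> config \<Rightarrow> complex" where
  "pauli_string n mu f g =
     pauli mu (f QA) (g QA) *
     (\<Prod>i\<in>{1..n}. pauli mu (f (QS i)) (g (QS i)) * (if f (QN i) = g (QN i) then 1 else 0))"

definition U_enc :: "nat \<Rightarrow> config \<Rightarrow> config \<Rightarrow> complex" where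
  "U_enc n f g = (1/2) * (\<Sum>mu<4. inverse (alpha n mu) * pauli_string n mu f g)"

definition enc_state :: "nat \<Rightarrow> (bool \<Rightarrow> complex) \<Rightarrow> config \<Rightarrow> complex" where
  "enc_state n psi f = (\<Sum>g\<in>configs (qubits n). U_enc n f g * init_state n psi g)"

definition glue :: "qlabel set \<Rightarrow> config \<Rightarrow> config \<Rightarrow> config" where
  "glue B x z = (\<lambda>q. if q \<in> B then x q else z q)"

text \<open>Reduced density matrix rho_B(psi) of rho_enc^(n) = |Psi_enc><Psi_enc|,
  obtained by tracing out all qubits not in B (A and storage qubits outside B):
  <x| rho_B |y> = sum_z <x z|Psi_enc> <Psi_enc|y z>.\<close>
definition reduced_state :: "nat \<Rightarrow> qlabel set \<Rightarrow> (bool \<Rightarrow> complex) \<Rightarrow> config \<Rightarrow> config \<Rightarrow> complex" where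
  "reduced_state n B psi x y =
     (\<Sum>z\<in>configs (qubits n - B).
        enc_state n psi (glue B x z) * cnj (enc_state n psi (glue B y z)))"

definition completely_noninformative :: "nat \<Rightarrow> qlabel set \<Rightarrow> bool" where
  "completely_noninformative n B \<longleftrightarrow>
     (\<forall>psi phi. pure_qubit psi \<longrightarrow> pure_qubit phi \<longrightarrow>
        (\<forall>x\<in>configs B. \<forall>y\<in>configs B. reduced_state n B psi x y = reduced_state n B phi x y))"

end

theory Submission imports Defs begin

definition flip :: "nat \<Rightarrow> bool \<Rightarrow> bool" where
  "flip mu b = (if mu = 1 \<or> mu = 2 then \<not> b else b)"

definition amp :: "nat \<Rightarrow> (bool \<Rightarrow> complex) \<Rightarrow> bool \<Rightarrow> complex" where
  "amp mu psi a = (\<Sum>c\<in>UNIV. pauli mu a c * psi c)"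

abbreviation rr :: complex where "rr \<equiv> complex_of_real (1 / sqrt 2)"

lemma pauli_nz: "pauli mu a c = (if c = flip mu a then pauli mu a (flip mu a) else 0)"
  by (auto simp: pauli_def flip_def)

lemma configs_eq: "configs X = (\<lambda>S q. q \<in> S) ` Pow X"
proof
  show "configs X \<subseteq> (\<lambda>S q. q \<in> S) ` Pow X"
  proof
    fix f assume "f \<in> configs X"
    hence "{q. f q} \<in> Pow X" "f = (\<lambda>q. q \<in> {q. f q})" by (auto simp: configs_def)
    thus "f \<in> (\<lambda>S q. q \<in> S) ` Pow X" by blast
  qed
qed (auto simp: configs_def)

lemma finite_configs: "finite X \<Longrightarrow> finite (configs X)"
  by (simp add: configs_eq)

lemma sum_configs_split:
  assumes "q \<in> X"
  shows "(\<Sum>z\<in>configs X. F z) = (\<Sum>z\<in>configs (X - {q}). \<Sum>b\<in>UNIV. F (z(q:=b)))"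
proof -
  have "bij_betw (\<lambda>(z,b). z(q:=b)) (configs (X - {q}) \<times> UNIV) (configs X)"
    by (rule bij_betw_byWitness[where f'="\<lambda>z. (z(q:=False), z q)"])
       (use assms in \<open>auto simp: configs_def fun_eq_iff split: if_splits\<close>)
  hence "(\<Sum>zb\<in>configs (X - {q}) \<times> UNIV. F ((\<lambda>(z,b). z(q:=b)) zb)) = (\<Sum>z\<in>configs X. F z)"
    by (rule sum.reindex_bij_betw)
  thus ?thesis by (simp add: sum.cartesian_product split_def)
qed

lemma finite_qubits: "finite (qubits n)" by (simp add: qubits_def)

lemma inner_sum:
  assumes f: "f \<in> configs (qubits n)"
  shows "(\<Sum>g\<in>configs (qubits n). pauli_string n mu f g * init_state n psi g)
     = amp mu psi (f QA) * (\<Prod>i\<in>{1..n}. pauli mu (f (QS i)) (f (QN i)) * rr)"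
proof -
  define g0 where "g0 = (\<lambda>q. if q \<in> qubits n then (case q of QN i \<Rightarrow> f q | _ \<Rightarrow> flip mu (f q)) else False)"
  have g0c: "g0 \<in> configs (qubits n)" by (auto simp: g0_def configs_def)
  have z: "pauli_string n mu f g = 0" if g: "g \<in> configs (qubits n)" "g \<noteq> g0" for g
  proof -
    obtain q where q: "g q \<noteq> g0 q" using g(2) by auto
    have qq: "q \<in> qubits n" using q g(1) by (auto simp: g0_def configs_def)
    show ?thesis
    proof (cases q)
      case QA
      then show ?thesis using q qq by (subst pauli_string_def, subst pauli_nz) (auto simp: g0_def)
    next
      case (QS i)
      hence i: "i \<in> {1..n}" using qq by (auto simp: qubits_def)
      have "pauli mu (f (QS i)) (g (QS i)) = 0" using q qq QS by (subst pauli_nz) (auto simp: g0_def)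
      hence "(\<Prod>i\<in>{1..n}. pauli mu (f (QS i)) (g (QS i)) * (if f (QN i) = g (QN i) then 1 else 0)) = 0"
        using i by (intro prod_zero) auto
      thus ?thesis by (simp add: pauli_string_def)
    next
      case (QN i)
      hence i: "i \<in> {1..n}" using qq by (auto simp: qubits_def)
      have "(\<Prod>i\<in>{1..n}. pauli mu (f (QS i)) (g (QS i)) * (if f (QN i) = g (QN i) then 1 else 0)) = 0"
        using i q qq QN by (intro prod_zero) (auto simp: g0_def)
      thus ?thesis by (simp add: pauli_string_def)
    qed
  qed
  have "(\<Sum>g\<in>configs (qubits n). pauli_string n mu f g * init_state n psi g)
      = pauli_string n mu f g0 * init_state n psi g0"
    by (subst sum.remove[OF finite_configs[OF finite_qubits] g0c])
       (auto intro!: sum.neutral simp: z)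
  also have "\<dots> = amp mu psi (f QA) * (\<Prod>i\<in>{1..n}. pauli mu (f (QS i)) (f (QN i)) * rr)"
  proof -
    have A: "g0 QA = flip mu (f QA)" by (simp add: g0_def qubits_def)
    have S: "g0 (QS i) = flip mu (f (QS i))" "g0 (QN i) = f (QN i)" if "i \<in> {1..n}" for i
      using that by (auto simp: g0_def qubits_def)
    have amp: "amp mu psi a = pauli mu a (flip mu a) * psi (flip mu a)" for a
      unfolding amp_def by (subst pauli_nz) (simp add: UNIV_bool)
    have "pauli_string n mu f g0 * init_state n psi g0 =
       (pauli mu (f QA) (flip mu (f QA)) * psi (flip mu (f QA))) *
       ((\<Prod>i\<in>{1..n}. pauli mu (f (QS i)) (flip mu (f (QS i)))) *
        (\<Prod>i\<in>{1..n}. if flip mu (f (QS i)) = f (QN i) then rr else 0))"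
    proof -
      have P1: "(\<Prod>i\<in>{1..n}. pauli mu (f (QS i)) (g0 (QS i)) * (if f (QN i) = g0 (QN i) then 1 else 0))
          = (\<Prod>i\<in>{1..n}. pauli mu (f (QS i)) (flip mu (f (QS i))))"
        by (intro prod.cong) (auto simp: S)
      have P2: "(\<Prod>i\<in>{1..n}. if g0 (QS i) = g0 (QN i) then rr else 0)
          = (\<Prod>i\<in>{1..n}. if flip mu (f (QS i)) = f (QN i) then rr else 0)"
        by (intro prod.cong) (auto simp: S)
      show ?thesis unfolding pauli_string_def init_state_def A P1 P2 by (simp add: ac_simps)
    qed
    also have "\<dots> = amp mu psi (f QA) * (\<Prod>i\<in>{1..n}. pauli mu (f (QS i)) (f (QN i)) * rr)"
    proof -
      have pw: "pauli mu s (flip mu s) * (if flip mu s = t then rr else 0) = pauli mu s t * rr" for s t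
        using pauli_nz[of mu s t] by auto
      show ?thesis unfolding amp prod.distrib[symmetric] pw ..
    qed
    finally show ?thesis .
  qed
  finally show ?thesis .
qed

lemma enc_closed:
  assumes f: "f \<in> configs (qubits n)"
  shows "enc_state n psi f = 1/2 * (\<Sum>mu<4. inverse (alpha n mu) *
           (amp mu psi (f QA) * (\<Prod>i\<in>{1..n}. pauli mu (f (QS i)) (f (QN i)) * rr)))"
proof -
  have "enc_state n psi f = (\<Sum>g\<in>configs (qubits n). 1/2 * (\<Sum>mu<4. inverse (alpha n mu) * (pauli_string n mu f g * init_state n psi g)))"
    unfolding enc_state_def U_enc_def by (simp add: sum_distrib_right mult.assoc)
  also have "\<dots> = 1/2 * (\<Sum>mu<4. inverse (alpha n mu) * (\<Sum>g\<in>configs (qubits n). pauli_string n mu f g * init_state n psi g))"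
    by (simp add: sum_distrib_left sum.swap[of _ "configs (qubits n)"])
  also have "\<dots> = 1/2 * (\<Sum>mu<4. inverse (alpha n mu) *
           (amp mu psi (f QA) * (\<Prod>i\<in>{1..n}. pauli mu (f (QS i)) (f (QN i)) * rr)))"
    by (simp add: inner_sum[OF f])
  finally show ?thesis .
qed

lemma rr_sq: "rr * rr = 1/2"
proof -
  have "rr * rr = complex_of_real ((1 / sqrt 2) * (1 / sqrt 2))" by (simp only: of_real_mult)
  also have "(1 / sqrt 2) * (1 / sqrt 2) = (1/2::real)" by (simp add: real_sqrt_mult[symmetric])
  finally show ?thesis by (simp only:) simp
qed

lemma cnj_rr: "cnj rr = rr" by simp

lemma L1: "mu < 4 \<Longrightarrow> nu < 4 \<Longrightarrow>
  (\<Sum>s\<in>UNIV. \<Sum>t\<in>UNIV. pauli mu s t * cnj (pauli nu s t)) = (if mu = nu then 2 else 0)"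
  by (auto simp: UNIV_bool pauli_def less_Suc_eq numeral_eq_Suc)

lemma L2: assumes "mu < 4" "pure_qubit psi"
  shows "(\<Sum>a\<in>UNIV. amp mu psi a * cnj (amp mu psi a)) = 1"
proof -
  have n: "psi False * cnj (psi False) + psi True * cnj (psi True) = 1"
    using assms(2) unfolding pure_qubit_def complex_norm_square[symmetric]
    by (metis of_real_1 of_real_add)
  show ?thesis using assms(1) n
    by (auto simp: UNIV_bool amp_def pauli_def less_Suc_eq numeral_eq_Suc algebra_simps)
qed

lemma G_lemma: assumes "mu < 4" "nu < 4" "pure_qubit psi"
  shows "(\<Sum>t\<in>UNIV. \<Sum>s\<in>UNIV. \<Sum>a\<in>UNIV. amp mu psi a * cnj (amp nu psi a) * (pauli mu s t * cnj (pauli nu s t)))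
    = (if mu = nu then 2 else 0)"
proof -
  have "(\<Sum>t\<in>UNIV. \<Sum>s\<in>UNIV. \<Sum>a\<in>UNIV. amp mu psi a * cnj (amp nu psi a) * (pauli mu s t * cnj (pauli nu s t)))
     = (\<Sum>a\<in>UNIV. amp mu psi a * cnj (amp nu psi a)) * (\<Sum>s\<in>UNIV. \<Sum>t\<in>UNIV. pauli mu s t * cnj (pauli nu s t))"
    by (simp add: UNIV_bool algebra_simps)
  also have "\<dots> = (if mu = nu then 2 else 0)"
    using L1[OF assms(1,2)] L2[OF assms(1,3)] by auto
  finally show ?thesis .
qed

lemma swap3: "(\<Sum>x\<in>A. \<Sum>m\<in>M. \<Sum>k\<in>M. h x m k) = (\<Sum>m\<in>M. \<Sum>k\<in>M. \<Sum>x\<in>A. h x m k)"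
  by (subst sum.swap) (simp add: sum.swap[of _ A])

lemma core:
  assumes "pure_qubit psi"
  shows "(\<Sum>t\<in>UNIV. \<Sum>s\<in>UNIV. \<Sum>a\<in>UNIV.
      (1/2 * (\<Sum>mu<4. K mu * (amp mu psi a * (pauli mu s t * rr * U mu)))) *
      cnj (1/2 * (\<Sum>mu<4. K mu * (amp mu psi a * (pauli mu s t * rr * V mu)))))
    = 1/4 * (\<Sum>mu<4. K mu * U mu * cnj (K mu * V mu))"
proof -
  define C where "C mu nu = 1/8 * (K mu * U mu * cnj (K nu * V nu))" for mu nu
  define h where "h a s t mu nu = amp mu psi a * cnj (amp nu psi a) * (pauli mu s t * cnj (pauli nu s t))" for a s t mu nu
  have E: "(1/2 * (\<Sum>mu<4. K mu * (amp mu psi a * (pauli mu s t * rr * U mu)))) *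
      cnj (1/2 * (\<Sum>mu<4. K mu * (amp mu psi a * (pauli mu s t * rr * V mu))))
    = (\<Sum>mu<4. \<Sum>nu<4. C mu nu * h a s t mu nu)" for a s t
  proof -
    have "(1/2 * (\<Sum>mu<4. K mu * (amp mu psi a * (pauli mu s t * rr * U mu)))) *
      cnj (1/2 * (\<Sum>mu<4. K mu * (amp mu psi a * (pauli mu s t * rr * V mu))))
      = (\<Sum>mu<4. \<Sum>nu<4. (1/2 * (K mu * (amp mu psi a * (pauli mu s t * rr * U mu)))) *
            cnj (1/2 * (K nu * (amp nu psi a * (pauli nu s t * rr * V nu)))))"
      by (simp only: sum_distrib_left[of "1/2"] cnj_sum sum_product)
    also have "\<dots> = (\<Sum>mu<4. \<Sum>nu<4. C mu nu * h a s t mu nu)"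
    proof (intro sum.cong refl)
      fix mu nu
      have "(1/2 * (K mu * (amp mu psi a * (pauli mu s t * rr * U mu)))) *
            cnj (1/2 * (K nu * (amp nu psi a * (pauli nu s t * rr * V nu))))
          = 1/4 * (rr * rr) * (K mu * U mu * cnj (K nu * V nu)) * (amp mu psi a * cnj (amp nu psi a) * (pauli mu s t * cnj (pauli nu s t)))"
        by (simp add: cnj_rr algebra_simps)
      thus "(1/2 * (K mu * (amp mu psi a * (pauli mu s t * rr * U mu)))) *
            cnj (1/2 * (K nu * (amp nu psi a * (pauli nu s t * rr * V nu)))) = C mu nu * h a s t mu nu"
        unfolding rr_sq C_def h_def by simp
    qed
    finally show ?thesis .
  qed
  have "(\<Sum>t\<in>UNIV. \<Sum>s\<in>UNIV. \<Sum>a\<in>UNIV. \<Sum>mu<4. \<Sum>nu<4. C mu nu * h a s t mu nu)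
      = (\<Sum>mu<4. \<Sum>nu<4. \<Sum>t\<in>UNIV. \<Sum>s\<in>UNIV. \<Sum>a\<in>UNIV. C mu nu * h a s t mu nu)"
  proof -
    have "(\<Sum>t\<in>UNIV. \<Sum>s\<in>UNIV. \<Sum>a\<in>UNIV. \<Sum>mu<4. \<Sum>nu<4. C mu nu * h a s t mu nu)
      = (\<Sum>t\<in>UNIV. \<Sum>s\<in>UNIV. \<Sum>mu<4. \<Sum>nu<4. \<Sum>a\<in>UNIV. C mu nu * h a s t mu nu)"
      by (rule sum.cong[OF refl], rule sum.cong[OF refl], rule swap3)
    also have "\<dots> = (\<Sum>t\<in>UNIV. \<Sum>mu<4. \<Sum>nu<4. \<Sum>s\<in>UNIV. \<Sum>a\<in>UNIV. C mu nu * h a s t mu nu)"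
      by (rule sum.cong[OF refl], rule swap3)
    also have "\<dots> = (\<Sum>mu<4. \<Sum>nu<4. \<Sum>t\<in>UNIV. \<Sum>s\<in>UNIV. \<Sum>a\<in>UNIV. C mu nu * h a s t mu nu)"
      by (rule swap3)
    finally show ?thesis .
  qed
  also have "\<dots> = (\<Sum>mu<4. \<Sum>nu<4. C mu nu * (if mu = nu then 2 else 0))"
    by (intro sum.cong refl) (simp add: sum_distrib_left[symmetric] h_def G_lemma[OF _ _ assms])
  also have "\<dots> = (\<Sum>mu<4. 2 * C mu mu)"
    by (intro sum.cong refl) (simp add: if_distrib[of "(*) _"] cong: if_cong)
  also have "\<dots> = 1/4 * (\<Sum>mu<4. K mu * U mu * cnj (K mu * V mu))"
    by (simp add: C_def sum_distrib_left mult.assoc)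
  finally show ?thesis by (simp only: E)
qed

definition RR :: "nat \<Rightarrow> nat \<Rightarrow> qlabel set \<Rightarrow> nat \<Rightarrow> config \<Rightarrow> config \<Rightarrow> complex" where
  "RR n j B mu x w = (\<Prod>i\<in>{1..n} - {j}. pauli mu (glue B x w (QS i)) (glue B x w (QN i)) * rr)"

lemma enc_fact:
  assumes B: "B \<subseteq> storage n" and j: "j \<in> {1..n}" and nB: "QS j \<notin> B" "QN j \<notin> B"
    and x: "x \<in> configs B" and w: "w \<in> configs (qubits n - B - {QA} - {QS j} - {QN j})"
  shows "enc_state n psi (glue B x (w(QN j := t, QS j := s, QA := a)))
    = 1/2 * (\<Sum>mu<4. inverse (alpha n mu) * (amp mu psi a * (pauli mu s t * rr * RR n j B mu x w)))"
proof -
  define f where "f = glue B x (w(QN j := t, QS j := s, QA := a))"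
  have QAB: "QA \<notin> B" using B by (auto simp: storage_def)
  have Bq: "B \<subseteq> qubits n" using B by (auto simp: storage_def qubits_def)
  have jq: "QS j \<in> qubits n" "QN j \<in> qubits n" "QA \<in> qubits n" using j by (auto simp: qubits_def)
  have fc: "f \<in> configs (qubits n)"
    using x w Bq jq by (auto simp: configs_def f_def glue_def)
  have fA: "f QA = a" "f (QS j) = s" "f (QN j) = t" using QAB nB by (auto simp: f_def glue_def)
  have fo: "f (QS i) = glue B x w (QS i)" "f (QN i) = glue B x w (QN i)" if "i \<noteq> j" for i
    using that by (auto simp: f_def glue_def)
  have P: "(\<Prod>i\<in>{1..n}. pauli mu (f (QS i)) (f (QN i)) * rr) = pauli mu s t * rr * RR n j B mu x w" for mu
    unfolding RR_def using j
    by (subst prod.remove[of _ j]) (auto simp: fA fo intro!: prod.cong)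
  show ?thesis
    unfolding f_def[symmetric] enc_closed[OF fc] P fA ..
qed

lemma reduced_formula:
  assumes B: "B \<subseteq> storage n" and j: "j \<in> {1..n}" and nB: "QS j \<notin> B" "QN j \<notin> B"
    and x: "x \<in> configs B" and y: "y \<in> configs B" and psi: "pure_qubit psi"
  shows "reduced_state n B psi x y =
    (\<Sum>w\<in>configs (qubits n - B - {QA} - {QS j} - {QN j}).
       1/4 * (\<Sum>mu<4. inverse (alpha n mu) * RR n j B mu x w * cnj (inverse (alpha n mu) * RR n j B mu y w)))"
proof -
  let ?X = "qubits n - B"
  let ?X' = "qubits n - B - {QA} - {QS j} - {QN j}"
  define F where "F z = enc_state n psi (glue B x z) * cnj (enc_state n psi (glue B y z))" for z
  have QAB: "QA \<notin> B" using B by (auto simp: storage_def)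
  have i1: "QA \<in> ?X" using QAB by (simp add: qubits_def)
  have i2: "QS j \<in> ?X - {QA}" using j nB by (simp add: qubits_def)
  have i3: "QN j \<in> ?X - {QA} - {QS j}" using j nB by (simp add: qubits_def)
  have "reduced_state n B psi x y = (\<Sum>z\<in>configs ?X. F z)"
    by (simp add: reduced_state_def F_def)
  also have "\<dots> = (\<Sum>z\<in>configs (?X - {QA}). \<Sum>a\<in>UNIV. F (z(QA := a)))"
    by (rule sum_configs_split[OF i1])
  also have "\<dots> = (\<Sum>z\<in>configs (?X - {QA} - {QS j}). \<Sum>s\<in>UNIV. \<Sum>a\<in>UNIV. F (z(QS j := s, QA := a)))"
    by (rule sum_configs_split[OF i2])
  also have "\<dots> = (\<Sum>w\<in>configs ?X'. \<Sum>t\<in>UNIV. \<Sum>s\<in>UNIV. \<Sum>a\<in>UNIV. F (w(QN j := t, QS j := s, QA := a)))"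
    by (rule sum_configs_split[OF i3])
  also have "\<dots> = (\<Sum>w\<in>configs ?X'.
       1/4 * (\<Sum>mu<4. inverse (alpha n mu) * RR n j B mu x w * cnj (inverse (alpha n mu) * RR n j B mu y w)))"
  proof (rule sum.cong[OF refl])
    fix w assume w: "w \<in> configs ?X'"
    show "(\<Sum>t\<in>UNIV. \<Sum>s\<in>UNIV. \<Sum>a\<in>UNIV. F (w(QN j := t, QS j := s, QA := a))) =
       1/4 * (\<Sum>mu<4. inverse (alpha n mu) * RR n j B mu x w * cnj (inverse (alpha n mu) * RR n j B mu y w))"
      unfolding F_def enc_fact[OF B j nB x w] enc_fact[OF B j nB y w]
      by (rule core[OF psi])
  qed
  finally show ?thesis .
qed

theorem proposition1:
  fixes n j :: nat and B :: "qlabel set"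
  assumes "n \<ge> 1"
    and "B \<subseteq> storage n"
    and "j \<in> {1..n}"
    and "QS j \<notin> B" and "QN j \<notin> B"
  shows "completely_noninformative n B"
  unfolding completely_noninformative_def
  using reduced_formula[OF assms(2-5)] by simp

end
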